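(* Let $f$, $u_0$, $L_f$, $V$, $\pi$, $L_v$, $L_\pi$ be as follows: $f:\mathcal{X}\times\mathcal{U}\to\mathcal{X}$ is Lipschitz with constant $L_f$ (i.e. $\|f(x,u)-f(x',u')\|_\infty\le L_f\|(x-x',u-u')\|_\infty$), $f(0,u_0)=0$, and $V:\mathcal{X}\to\mathbb{R}$, $\pi:\mathcal{X}\to\mathcal{U}$ are Lipschitz (w.r.t. $\|\cdot\|_\infty$) with constants $L_v,L_\pi$. Let $\mathcal{R}\subseteq\mathcal{X}$ be compact, $c_1\ge0$, and $c_2=\max\{L_v,1\}L_f\max\{1,L_\pi+c_1\}$. Let $\eta>0$ with $\mathcal{B}(0,\eta)\subset\mathcal{R}$, and assume $V(x)>0$ for all $x\in\mathcal{R}$ with $\|x\|_\infty\ge\eta$. Then there exists $\bar\epsilon>0$ such that for every $\epsilon\in(0,\bar\epsilon]$ the following holds: if $(V,\pi)$ is $\epsilon$-stable within $\mathcal{R}$, $\mathcal{D}(\mathcal{R},\rho)$ is an $\mathcal{R}$-invariant sublevel set with $\mathcal{B}(0,\epsilon)\subset\mathcal{D}(\mathcal{R},\rho)$, $\|\pi(0)-u_0\|_\infty\le c_1\epsilon$, $c_2\epsilon<\rho$ and $\mathcal{B}(0,c_2\epsilon)\subset\mathcal{R}$, then for every $x_0\in\mathcal{D}(\mathcal{R},\rho)\setminus\mathcal{B}(0,\epsilon)$ the sequence $x_{k+1}=f(x_k,\pi(x_k))$ satisfies $\|x_k\|_\infty\le\eta$ for all $k\ge K$, for some finite $K$.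
   Context: All norms are $\|\cdot\|_\infty$. $\mathcal{B}(0,\epsilon)=\{x:\|x\|_\infty<\epsilon\}$. The pair $(V,\pi)$ is called $\epsilon$-stable within a region $\mathcal{R}$ if: (a) $V(0)=0$; (b) there exists $\zeta>0$ such that $V(f(x,\pi(x)))-V(x)<-\zeta$ for all $x\in\mathcal{R}\setminus\mathcal{B}(0,\epsilon)$; (c) $V(x)>0$ for all $x\in\mathcal{R}\setminus\mathcal{B}(0,\epsilon)$. For $\rho\in\mathbb{R}$, $\mathcal{D}(\mathcal{R},\rho)=\{x\in\mathcal{R}: V(x)\le\rho\}$; it is called an $\mathcal{R}$-invariant sublevel set if $x\in\mathcal{D}(\mathcal{R},\rho)$ implies $f(x,\pi(x))\in\mathcal{R}$. *)

theory Defs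
  imports "HOL-Analysis.Analysis"
begin

definition linf :: "real ^ 'n \<Rightarrow> real" where
  "linf x = Max (range (\<lambda>i. \<bar>x $ i\<bar>))"

definition ball_inf :: "real \<Rightarrow> (real ^ 'n) set" where
  "ball_inf e = {x. linf x < e}"

definition eps_stable ::
  "(real ^ 'n \<Rightarrow> real ^ 'm \<Rightarrow> real ^ 'n) \<Rightarrow> (real ^ 'n \<Rightarrow> real) \<Rightarrow>
   (real ^ 'n \<Rightarrow> real ^ 'm) \<Rightarrow> (real ^ 'n) set \<Rightarrow> real \<Rightarrow> bool" where
  "eps_stable f V \<pi> R e \<longleftrightarrow>
     V 0 = 0 \<and>
     (\<exists>\<zeta>>0. \<forall>x\<in>R - ball_inf e. V (f x (\<pi> x)) - V x < - \<zeta>) \<and>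
     (\<forall>x\<in>R - ball_inf e. V x > 0)"

definition sublevel :: "(real ^ 'n \<Rightarrow> real) \<Rightarrow> (real ^ 'n) set \<Rightarrow> real \<Rightarrow> (real ^ 'n) set" where
  "sublevel V R \<rho> = {x\<in>R. V x \<le> \<rho>}"

definition R_invariant ::
  "(real ^ 'n \<Rightarrow> real ^ 'm \<Rightarrow> real ^ 'n) \<Rightarrow> (real ^ 'n \<Rightarrow> real) \<Rightarrow>
   (real ^ 'n \<Rightarrow> real ^ 'm) \<Rightarrow> (real ^ 'n) set \<Rightarrow> real \<Rightarrow> bool" where
  "R_invariant f V \<pi> R \<rho> \<longleftrightarrow> (\<forall>x\<in>sublevel V R \<rho>. f x (\<pi> x) \<in> R)"

end

theory Submission
  imports Defs
begin

lemma linf_ge: "\<bar>x $ i\<bar> \<le> linf x"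
  unfolding linf_def by (rule Max_ge) auto

lemma linf_le: "(\<And>i. \<bar>x $ i\<bar> \<le> c) \<Longrightarrow> linf x \<le> c"
  unfolding linf_def by (subst Max_le_iff) auto

lemma linf_nonneg: "0 \<le> linf x"
  using linf_ge[of x undefined] by linarith

lemma linf_triangle: "linf (x + y) \<le> linf x + linf y"
  apply (rule linf_le)
  subgoal for i using linf_ge[of x i] linf_ge[of y i] abs_triangle_ineq[of "x$i" "y$i"] by simp
  done

lemma linf_sub_triangle: "linf (x - z) \<le> linf (x - y) + linf (y - z)"
  using linf_triangle[of "x - y" "y - z"] by simp

lemma linf_le_norm: "linf x \<le> norm x"
  by (rule linf_le) (rule component_le_norm_cart)

lemma linf_zero: "linf 0 = 0"
  using linf_le[of 0 0] linf_nonneg[of 0] by (auto intro: antisym)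

lemma linf_vec: "linf (vec c) = \<bar>c\<bar>"
  using linf_le[of "vec c" "\<bar>c\<bar>"] linf_ge[of "vec c" undefined] by (auto intro: antisym)

lemma linf_lip: "\<bar>linf x - linf y\<bar> \<le> linf (x - y)"
proof -
  have "linf x \<le> linf (x - y) + linf y" using linf_sub_triangle[of x 0 y] by simp
  moreover have "linf y \<le> linf (y - x) + linf x" using linf_sub_triangle[of y 0 x] by simp
  moreover have "linf (y - x) = linf (x - y)"
    apply (rule antisym; rule linf_le)
    subgoal for i using linf_ge[of "x - y" i] by simp
    subgoal for i using linf_ge[of "y - x" i] by simp
    done
  ultimately show ?thesis by linarith
qed

lemma linf_cont: "continuous_on UNIV (linf :: real ^ 'n \<Rightarrow> real)"
proof (rule lipschitz_on_continuous_on)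
  show "1-lipschitz_on UNIV (linf :: real ^ 'n \<Rightarrow> real)"
    unfolding lipschitz_on_def dist_real_def dist_norm
    using linf_lip linf_le_norm order_trans by fastforce
qed

lemma vec1: "linf ((0::real^'n) - vec 1) = 1"
proof -
  have "(0::real^'n) - vec 1 = vec (-1)" by (simp add: vec_eq_iff)
  then show ?thesis using linf_vec[of "-1::real"] by simp
qed

theorem theorem1:
  fixes f :: "real ^ 'n \<Rightarrow> real ^ 'm \<Rightarrow> real ^ 'n"
    and V :: "real ^ 'n \<Rightarrow> real"
    and \<pi> :: "real ^ 'n \<Rightarrow> real ^ 'm"
    and u0 :: "real ^ 'm"
    and R :: "(real ^ 'n) set"
    and L_f L_v L_\<pi> c1 c2 \<eta> :: real
  assumes f_lip: "\<And>x x' u u'. linf (f x u - f x' u') \<le> L_f * max (linf (x - x')) (linf (u - u'))"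
    and f0: "f 0 u0 = 0"
    and V_lip: "\<And>x x'. \<bar>V x - V x'\<bar> \<le> L_v * linf (x - x')"
    and \<pi>_lip: "\<And>x x'. linf (\<pi> x - \<pi> x') \<le> L_\<pi> * linf (x - x')"
    and R_compact: "compact R"
    and c1: "c1 \<ge> 0"
    and c2: "c2 = max L_v 1 * L_f * max 1 (L_\<pi> + c1)"
    and \<eta>: "\<eta> > 0" "ball_inf \<eta> \<subseteq> R"
    and Vpos: "\<forall>x\<in>R. linf x \<ge> \<eta> \<longrightarrow> V x > 0"
  shows "\<exists>\<epsilon>bar>0. \<forall>\<epsilon>. 0 < \<epsilon> \<and> \<epsilon> \<le> \<epsilon>bar \<longrightarrow> (\<forall>\<rho>.
           eps_stable f V \<pi> R \<epsilon> \<and> R_invariant f V \<pi> R \<rho> \<and>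
           ball_inf \<epsilon> \<subseteq> sublevel V R \<rho> \<and>
           linf (\<pi> 0 - u0) \<le> c1 * \<epsilon> \<and> c2 * \<epsilon> < \<rho> \<and> ball_inf (c2 * \<epsilon>) \<subseteq> R \<longrightarrow>
           (\<forall>x0 \<in> sublevel V R \<rho> - ball_inf \<epsilon>.
              \<exists>K. \<forall>k\<ge>K. linf (((\<lambda>x. f x (\<pi> x)) ^^ k) x0) \<le> \<eta>))"
proof -
  define T where "T = (\<lambda>x. f x (\<pi> x))"
  have Lf: "L_f \<ge> 0"
  proof -
    have a: "linf ((0::real^'n) - vec 1) = 1" by (rule vec1)
    have b: "linf (u0 - u0) = 0" by (simp add: linf_zero)
    have "max (linf ((0::real^'n) - vec 1)) (linf (u0 - u0)) = 1" unfolding a b by simp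
    then show ?thesis
      using f_lip[of 0 u0 "vec 1" u0] linf_nonneg[of "f 0 u0 - f (vec 1) u0"] by simp
  qed
  have Lv: "L_v \<ge> 0"
    using V_lip[of 0 "vec 1", unfolded vec1] abs_ge_zero[of "V 0 - V (vec 1)"] by simp
  have Lp: "L_\<pi> \<ge> 0"
    using \<pi>_lip[of 0 "vec 1", unfolded vec1] linf_nonneg[of "\<pi> 0 - \<pi> (vec 1)"] by simp
  have c2nn: "c2 \<ge> 0" unfolding c2 using Lf by simp
  have Vcont: "continuous_on UNIV V"
  proof (rule lipschitz_on_continuous_on)
    show "L_v-lipschitz_on UNIV V"
      unfolding lipschitz_on_def dist_real_def dist_norm
    proof (intro conjI Lv ballI)
      fix x y :: "real^'n"
      have "L_v * linf (x - y) \<le> L_v * norm (x - y)" using Lv linf_le_norm by (intro mult_left_mono)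
      then show "\<bar>V x - V y\<bar> \<le> L_v * norm (x - y)" using V_lip[of x y] by linarith
    qed
  qed
  obtain m where m: "m > 0" "\<And>x. x \<in> R \<Longrightarrow> V x < m \<Longrightarrow> linf x < \<eta>"
  proof (cases "R \<inter> {x. \<eta> \<le> linf x} = {}")
    case True
    show ?thesis by (rule that[of 1]) (use True in auto)
  next
    case False
    have "closed {x::real^'n. (\<lambda>_. \<eta>) x \<le> linf x}"
      by (rule closed_Collect_le) (auto intro: linf_cont)
    then have cS: "compact (R \<inter> {x. \<eta> \<le> linf x})"
      using R_compact by (simp add: compact_Int_closed)
    obtain xs where xs: "xs \<in> R \<inter> {x. \<eta> \<le> linf x}" "\<And>y. y \<in> R \<inter> {x. \<eta> \<le> linf x} \<Longrightarrow> V xs \<le> V y"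
      using continuous_attains_inf[OF cS False continuous_on_subset[OF Vcont]] by blast
    show ?thesis
    proof (rule that[of "V xs"])
      show "V xs > 0" using xs(1) Vpos by auto
      fix x assume "x \<in> R" "V x < V xs"
      then show "linf x < \<eta>" using xs(2)[of x] by force
    qed
  qed
  obtain b where b: "\<And>x. x \<in> R \<Longrightarrow> b \<le> V x"
  proof (cases "R = {}")
    case True then show ?thesis using that by auto
  next
    case False
    obtain xs where "xs \<in> R" "\<And>y. y \<in> R \<Longrightarrow> V xs \<le> V y"
      using continuous_attains_inf[OF R_compact False continuous_on_subset[OF Vcont]] by blast
    then show ?thesis using that by blast
  qed
  show ?thesis
  proof (intro exI[of _ "min \<eta> (m / (2*(c2+1)))"] conjI allI impI ballI)
    show "0 < min \<eta> (m / (2 * (c2 + 1)))" using \<eta> m c2nn by simp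
    fix \<epsilon> \<rho> x0
    assume e: "0 < \<epsilon> \<and> \<epsilon> \<le> min \<eta> (m / (2 * (c2 + 1)))"
    assume H: "eps_stable f V \<pi> R \<epsilon> \<and> R_invariant f V \<pi> R \<rho> \<and>
           ball_inf \<epsilon> \<subseteq> sublevel V R \<rho> \<and>
           linf (\<pi> 0 - u0) \<le> c1 * \<epsilon> \<and> c2 * \<epsilon> < \<rho> \<and> ball_inf (c2 * \<epsilon>) \<subseteq> R"
    assume x0: "x0 \<in> sublevel V R \<rho> - ball_inf \<epsilon>"
    from H obtain \<zeta> where z: "\<zeta> > 0" "\<And>x. x \<in> R - ball_inf \<epsilon> \<Longrightarrow> V (T x) - V x < - \<zeta>"
      unfolding eps_stable_def T_def by blast
    from H have V0: "V 0 = 0" unfolding eps_stable_def by blast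
    from H have inv: "\<And>x. x \<in> sublevel V R \<rho> \<Longrightarrow> T x \<in> R"
      unfolding R_invariant_def T_def by blast
    from H have pi0: "linf (\<pi> 0 - u0) \<le> c1 * \<epsilon>" and rho: "c2 * \<epsilon> < \<rho>" by auto
    have c2e: "c2 * \<epsilon> < m"
    proof -
      have "c2 * \<epsilon> \<le> (c2 + 1) * \<epsilon>" using e by simp
      also have "\<dots> \<le> (c2 + 1) * (m / (2 * (c2 + 1)))"
        using e c2nn by (intro mult_left_mono) auto
      also have "\<dots> = m / 2" using c2nn by (simp add: field_simps)
      finally show ?thesis using m by linarith
    qed
    have B: "V (T x) \<le> c2 * \<epsilon>" if lx: "linf x < \<epsilon>" for x
    proof -
      define M where "M = max 1 (L_\<pi> + c1)"
      have "linf (\<pi> x - u0) \<le> linf (\<pi> x - \<pi> 0) + linf (\<pi> 0 - u0)" by (rule linf_sub_triangle)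
      also have "\<dots> \<le> L_\<pi> * linf x + c1 * \<epsilon>" using \<pi>_lip[of x 0] pi0 by simp
      also have "\<dots> \<le> L_\<pi> * \<epsilon> + c1 * \<epsilon>" using Lp lx by (simp add: mult_left_mono)
      also have "\<dots> \<le> M * \<epsilon>" unfolding M_def using e
        by (simp add: distrib_right[symmetric] mult_right_mono)
      finally have hp: "linf (\<pi> x - u0) \<le> M * \<epsilon>" .
      have hx: "linf x \<le> M * \<epsilon>" unfolding M_def using lx e
        by (smt (verit) max.cobounded1 mult_right_mono mult_cancel_right1)
      have "linf (T x) \<le> L_f * max (linf x) (linf (\<pi> x - u0))"
        using f_lip[of x "\<pi> x" 0 u0] f0 by (simp add: T_def)
      also have "\<dots> \<le> L_f * (M * \<epsilon>)" using hp hx Lf by (intro mult_left_mono) auto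
      finally have hT: "linf (T x) \<le> L_f * (M * \<epsilon>)" .
      have "V (T x) \<le> L_v * linf (T x)" using V_lip[of "T x" 0] V0 by simp
      also have "\<dots> \<le> max L_v 1 * linf (T x)" using linf_nonneg by (intro mult_right_mono) auto
      also have "\<dots> \<le> max L_v 1 * (L_f * (M * \<epsilon>))" using hT by (intro mult_left_mono) auto
      also have "\<dots> = c2 * \<epsilon>" unfolding c2 M_def by simp
      finally show ?thesis .
    qed
    have inD: "T x \<in> sublevel V R \<rho>" if xD: "x \<in> sublevel V R \<rho>" for x
    proof (cases "x \<in> ball_inf \<epsilon>")
      case True
      then have "V (T x) \<le> c2 * \<epsilon>" using B by (simp add: ball_inf_def)
      then show ?thesis using inv[OF xD] rho by (simp add: sublevel_def)
    next
      case False
      then have "V (T x) - V x < - \<zeta>" using z(2) xD by (simp add: sublevel_def)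
      then show ?thesis using inv[OF xD] xD z(1) by (simp add: sublevel_def)
    qed
    define xs where "xs k = (T ^^ k) x0" for k
    have xsD: "xs k \<in> sublevel V R \<rho>" for k
      by (induction k) (use x0 inD in \<open>auto simp: xs_def\<close>)
    have xsR: "xs k \<in> R" for k using xsD[of k] by (simp add: sublevel_def)
    have xsS: "xs (Suc k) = T (xs k)" for k by (simp add: xs_def)
    have "\<exists>k0. xs k0 \<in> ball_inf \<epsilon>"
    proof (rule ccontr)
      assume "\<not> ?thesis"
      then have out: "\<And>k. xs k \<notin> ball_inf \<epsilon>" by blast
      have dec: "V (xs k) \<le> V x0 - real k * \<zeta>" for k
      proof (induction k)
        case 0 then show ?case by (simp add: xs_def)
      next
        case (Suc k)
        have "V (xs (Suc k)) - V (xs k) < - \<zeta>" using z(2)[of "xs k"] xsR out xsS by auto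
        then show ?case using Suc by (simp add: algebra_simps)
      qed
      obtain k where "V x0 - b < real k * \<zeta>" using ex_less_of_nat_mult[OF z(1)] by blast
      then show False using dec[of k] b[OF xsR[of k]] by linarith
    qed
    then obtain k0 where k0: "xs k0 \<in> ball_inf \<epsilon>" by blast
    have inv2: "xs k \<in> ball_inf \<epsilon> \<or> V (xs k) \<le> c2 * \<epsilon>" if "k0 \<le> k" for k
      using that
    proof (induction k rule: dec_induct)
      case base then show ?case using k0 by simp
    next
      case (step n)
      show ?case
      proof (cases "xs n \<in> ball_inf \<epsilon>")
        case True then show ?thesis using B xsS by (simp add: ball_inf_def)
      next
        case False
        then have "V (xs (Suc n)) - V (xs n) < - \<zeta>" using z(2)[of "xs n"] xsR xsS by auto
        then show ?thesis using step.IH False z(1) by auto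
      qed
    qed
    show "\<exists>K. \<forall>k\<ge>K. linf (((\<lambda>x. f x (\<pi> x)) ^^ k) x0) \<le> \<eta>"
    proof (intro exI[of _ k0] allI impI)
      fix k assume "k0 \<le> k"
      then have "xs k \<in> ball_inf \<epsilon> \<or> V (xs k) \<le> c2 * \<epsilon>" by (rule inv2)
      then have "linf (xs k) \<le> \<eta>"
      proof
        assume "xs k \<in> ball_inf \<epsilon>" then show ?thesis using e by (simp add: ball_inf_def)
      next
        assume "V (xs k) \<le> c2 * \<epsilon>"
        then show ?thesis using m(2)[OF xsR[of k]] c2e by force
      qed
      then show "linf (((\<lambda>x. f x (\<pi> x)) ^^ k) x0) \<le> \<eta>" by (simp add: xs_def T_def)
    qed
  qed
qed

end
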